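(* Let $d\ge3$ and let $X,Y\in M_d(\mathbb{C})$ be diagonal matrices. Then the matrix $H(X,Y)$ is positive semidefinite, where $H(X,Y)$ is the hermitian matrix of order $2d^2$ given by $H=H_1-\tfrac12(H_2+H_3)+\tfrac14H_4$ with $$H_1=\begin{bmatrix}\|X\|^2&\operatorname{tr}(X^\dagger Y)\\ \operatorname{tr}(Y^\dagger X)&\|Y\|^2\end{bmatrix}\otimes I_{d^2},\qquad H_2=\begin{bmatrix}X^\dagger X&X^\dagger Y\\ Y^\dagger X&Y^\dagger Y\end{bmatrix}\otimes I_d,$$ $$H_3=\begin{bmatrix}I_d\otimes X^*X^T&I_d\otimes X^*Y^T\\ I_d\otimes Y^*X^T&I_d\otimes Y^*Y^T\end{bmatrix},\qquad H_4=\begin{bmatrix}\tilde X^*\tilde X^T&\tilde X^*\tilde Y^T\\ \tilde Y^*\tilde X^T&\tilde Y^*\tilde Y^T\end{bmatrix}.$$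
   Context: $Z^*$ is the entrywise complex conjugate, $Z^T$ the transpose, $Z^\dagger$ the conjugate transpose, $\|Z\|^2=\operatorname{tr}(Z^\dagger Z)$, $I_m$ the identity matrix of order $m$, and $A\otimes B=[a_{ij}B]$ for $A=[a_{ij}]$. For a matrix $Z$, $\tilde Z$ is the column vector obtained by stacking the columns of $Z$ one below the other, starting with the first. *)

theory Defs
  imports "Jordan_Normal_Form.Matrix"
begin

definition cconj :: "complex mat \<Rightarrow> complex mat" where
  "cconj Z = map_mat cnj Z"

definition adj :: "complex mat \<Rightarrow> complex mat" where
  "adj Z = transpose_mat (cconj Z)"

definition trace :: "complex mat \<Rightarrow> complex" where
  "trace A = (\<Sum>i<dim_row A. A $$ (i, i))"

definition frob_sq :: "complex mat \<Rightarrow> complex" where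
  "frob_sq Z = trace (adj Z * Z)"

definition kron :: "complex mat \<Rightarrow> complex mat \<Rightarrow> complex mat" where
  "kron A B = mat (dim_row A * dim_row B) (dim_col A * dim_col B)
     (\<lambda>(i, j). A $$ (i div dim_row B, j div dim_col B) * B $$ (i mod dim_row B, j mod dim_col B))"

(* vec Z: stack the columns of Z, first column on top; result is an (mn) x 1 column matrix *)
definition stack :: "complex mat \<Rightarrow> complex mat" where
  "stack Z = mat (dim_row Z * dim_col Z) 1 (\<lambda>(i, _). Z $$ (i mod dim_row Z, i div dim_row Z))"

definition blk :: "complex mat \<Rightarrow> complex mat \<Rightarrow> complex mat \<Rightarrow> complex mat \<Rightarrow> complex mat" where
  "blk A B C D = four_block_mat A B C D"

definition mat2 :: "complex \<Rightarrow> complex \<Rightarrow> complex \<Rightarrow> complex \<Rightarrow> complex mat" where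
  "mat2 a b c e = mat 2 2 (\<lambda>(i, j). if i = 0 then (if j = 0 then a else b) else (if j = 0 then c else e))"

definition psd :: "complex mat \<Rightarrow> bool" where
  "psd A \<longleftrightarrow> (\<exists>n. A \<in> carrier_mat n n \<and> adj A = A \<and>
     (\<forall>v \<in> carrier_vec n. 0 \<le> Re (map_vec cnj v \<bullet> (A *\<^sub>v v))))"

definition H1 :: "nat \<Rightarrow> complex mat \<Rightarrow> complex mat \<Rightarrow> complex mat" where
  "H1 d X Y = kron (mat2 (frob_sq X) (trace (adj X * Y)) (trace (adj Y * X)) (frob_sq Y)) (1\<^sub>m (d * d))"

definition H2 :: "nat \<Rightarrow> complex mat \<Rightarrow> complex mat \<Rightarrow> complex mat" where
  "H2 d X Y = kron (blk (adj X * X) (adj X * Y) (adj Y * X) (adj Y * Y)) (1\<^sub>m d)"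

definition H3 :: "nat \<Rightarrow> complex mat \<Rightarrow> complex mat \<Rightarrow> complex mat" where
  "H3 d X Y = blk (kron (1\<^sub>m d) (cconj X * transpose_mat X)) (kron (1\<^sub>m d) (cconj X * transpose_mat Y))
                  (kron (1\<^sub>m d) (cconj Y * transpose_mat X)) (kron (1\<^sub>m d) (cconj Y * transpose_mat Y))"

definition H4 :: "complex mat \<Rightarrow> complex mat \<Rightarrow> complex mat" where
  "H4 X Y = blk (cconj (stack X) * transpose_mat (stack X)) (cconj (stack X) * transpose_mat (stack Y))
                (cconj (stack Y) * transpose_mat (stack X)) (cconj (stack Y) * transpose_mat (stack Y))"

definition Hmat :: "nat \<Rightarrow> complex mat \<Rightarrow> complex mat \<Rightarrow> complex mat" where
  "Hmat d X Y = H1 d X Y - (1/2 :: complex) \<cdot>\<^sub>m (H2 d X Y + H3 d X Y) + (1/4 :: complex) \<cdot>\<^sub>m H4 X Y"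

end

theory Submission
  imports Defs
begin

definition Zs :: "complex mat \<Rightarrow> complex mat \<Rightarrow> nat \<Rightarrow> complex mat" where
  "Zs X Y a = (if a = 0 then X else Y)"

lemma kron_index:
  assumes "I < dim_row A * dim_row B" "J < dim_col A * dim_col B"
  shows "kron A B $$ (I,J) = A $$ (I div dim_row B, J div dim_col B) * B $$ (I mod dim_row B, J mod dim_col B)"
  using assms unfolding kron_def by simp

lemma kron_dim[simp]: "dim_row (kron A B) = dim_row A * dim_row B" "dim_col (kron A B) = dim_col A * dim_col B"
  unfolding kron_def by simp_all

lemma blk_index:
  assumes "\<And>a b. G (Zs X Y a) (Zs X Y b) \<in> carrier_mat n n" "I < 2*n" "J < 2*n"
  shows "blk (G X X) (G X Y) (G Y X) (G Y Y) $$ (I,J) = G (Zs X Y (I div n)) (Zs X Y (J div n)) $$ (I mod n, J mod n)"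
proof -
  have c: "G X X \<in> carrier_mat n n" "G X Y \<in> carrier_mat n n" "G Y X \<in> carrier_mat n n" "G Y Y \<in> carrier_mat n n"
    using assms(1)[of 0 0] assms(1)[of 1 1] assms(1)[of 0 1] assms(1)[of 1 0] by (simp_all add: Zs_def)
  have n: "n > 0" using assms by auto
  show ?thesis using assms(2,3) c n
    by (auto simp: blk_def Zs_def div_eq_0_iff less_mult_imp_div_less le_div_geq le_mod_geq not_less)
qed

lemma blk_dim: assumes "A \<in> carrier_mat n n" "D \<in> carrier_mat n n"
  shows "dim_row (blk A B C D) = 2*n" "dim_col (blk A B C D) = 2*n"
  using assms by (auto simp: blk_def)

lemma mat2_index: assumes "a < 2" "b < 2"
  shows "mat2 (h X X) (h X Y) (h Y X) (h Y Y) $$ (a,b) = h (Zs X Y a) (Zs X Y b)"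
  using assms by (auto simp: mat2_def Zs_def less_2_cases_iff)

lemma mat2_dim[simp]: "dim_row (mat2 a b c e) = 2" "dim_col (mat2 a b c e) = 2"
  by (simp_all add: mat2_def)

lemma diag_entry: assumes "A \<in> carrier_mat d d" "diagonal_mat A" "l < d" "p < d"
  shows "A $$ (l,p) = (if l = p then A $$ (p,p) else 0)"
  using assms unfolding diagonal_mat_def by auto

lemma diag_adj_mult: assumes "A \<in> carrier_mat d d" "B \<in> carrier_mat d d" "diagonal_mat A" "diagonal_mat B"
  "p < d" "q < d"
  shows "(adj A * B) $$ (p,q) = (if p = q then cnj (A $$ (p,p)) * B $$ (p,p) else 0)"
proof -
  have "(adj A * B) $$ (p,q) = (\<Sum>l<d. cnj (A $$ (l,p)) * B $$ (l,q))"
    using assms by (simp add: adj_def cconj_def scalar_prod_def lessThan_atLeast0)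
  also have "\<dots> = (\<Sum>l<d. if l = p then cnj (A $$ (p,p)) * B $$ (p,q) else 0)"
    by (rule sum.cong, simp, subst diag_entry[OF assms(1,3)], auto simp: assms)
  also have "\<dots> = cnj (A $$ (p,p)) * B $$ (p,q)" using assms by simp
  finally show ?thesis using diag_entry[OF assms(2,4,5,6)] by simp
qed

lemma diag_cconj_mult: assumes "A \<in> carrier_mat d d" "B \<in> carrier_mat d d" "diagonal_mat A" "diagonal_mat B"
  "p < d" "q < d"
  shows "(cconj A * transpose_mat B) $$ (p,q) = (if p = q then cnj (A $$ (p,p)) * B $$ (p,p) else 0)"
proof -
  have "(cconj A * transpose_mat B) $$ (p,q) = (\<Sum>l<d. cnj (A $$ (p,l)) * B $$ (q,l))"
    using assms by (simp add: cconj_def scalar_prod_def lessThan_atLeast0)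
  also have "\<dots> = (\<Sum>l<d. if l = p then cnj (A $$ (p,p)) * B $$ (q,p) else 0)"
    by (rule sum.cong, simp, subst diag_entry[OF assms(1,3)], auto simp: assms)
  also have "\<dots> = cnj (A $$ (p,p)) * B $$ (q,p)" using assms by simp
  finally show ?thesis using diag_entry[OF assms(2,4,6,5)] by auto
qed

lemma trace_adj_mult: assumes "A \<in> carrier_mat d d" "B \<in> carrier_mat d d" "diagonal_mat A" "diagonal_mat B"
  shows "trace (adj A * B) = (\<Sum>k<d. cnj (A $$ (k,k)) * B $$ (k,k))"
proof -
  have "dim_row (adj A * B) = d" using assms by (simp add: adj_def cconj_def)
  then show ?thesis unfolding trace_def by (intro sum.cong) (auto simp: diag_adj_mult[OF assms])
qed

lemma stack_index: assumes "A \<in> carrier_mat d d" "i < d*d"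
  shows "stack A $$ (i,0) = A $$ (i mod d, i div d)" "dim_row (stack A) = d*d" "dim_col (stack A) = 1"
  using assms by (auto simp: stack_def)

lemma stack_mult: assumes "A \<in> carrier_mat d d" "B \<in> carrier_mat d d" "i < d*d" "j < d*d"
  shows "(cconj (stack A) * transpose_mat (stack B)) $$ (i,j) = cnj (A $$ (i mod d, i div d)) * B $$ (j mod d, j div d)"
  using assms by (simp add: cconj_def scalar_prod_def stack_index)

lemma ar_e: "I mod (d*d) = d * ((I div d) mod d) + I mod (d::nat)" by (simp add: mod_mult2_eq mult.commute)
lemma arith1: assumes "(0::nat) < d"
  shows "(I mod (d*d)) div d = (I div d) mod d" "(I mod (d*d)) mod d = I mod d"
        "I div d div d = I div (d*d)"
        "(I mod (d*d) = J mod (d*d)) \<longleftrightarrow> ((I div d) mod d = (J div d) mod d \<and> I mod d = J mod d)"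
proof -
  show a1: "\<And>I. (I mod (d*d)) div d = (I div d) mod d" using assms by (subst ar_e) simp
  show a2: "\<And>I. (I mod (d*d)) mod d = I mod d" by (simp add: mod_mod_cancel)
  show "I div d div d = I div (d*d)" by (simp add: div_mult2_eq)
  show "(I mod (d*d) = J mod (d*d)) \<longleftrightarrow> ((I div d) mod d = (J div d) mod d \<and> I mod d = J mod d)"
    by (metis a1 a2 ar_e)
qed

definition ww :: "nat \<Rightarrow> nat \<times> nat \<Rightarrow> real" where
  "ww d m = (case m of (k,i) \<Rightarrow> 1 - (if k = i div d then 1/2 else 0) - (if k = i mod d then 1/2 else 0))"
definition gg :: "nat \<Rightarrow> complex mat \<Rightarrow> complex mat \<Rightarrow> nat \<times> nat \<Rightarrow> nat \<Rightarrow> complex" where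
  "gg d X Y m I = (case m of (k,i) \<Rightarrow> if I mod (d*d) = i then Zs X Y (I div (d*d)) $$ (k,k) else 0)"
definition hh :: "nat \<Rightarrow> complex mat \<Rightarrow> complex mat \<Rightarrow> nat \<Rightarrow> complex" where
  "hh d X Y I = Zs X Y (I div (d*d)) $$ ((I mod (d*d)) mod d, (I mod (d*d)) div d)"

lemma ww_nonneg: "ww d m \<ge> 0" unfolding ww_def by (auto split: prod.splits)

lemma gram_psd:
  fixes A :: "complex mat" and M :: "'m set" and c :: "'m \<Rightarrow> real" and g :: "'m \<Rightarrow> nat \<Rightarrow> complex"
    and h :: "nat \<Rightarrow> complex" and c0 :: real
  assumes A: "A \<in> carrier_mat n n" and fM: "finite M" and cpos: "\<And>m. c m \<ge> 0" and c0: "c0 \<ge> 0"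
    and ent: "\<And>I J. I < n \<Longrightarrow> J < n \<Longrightarrow> A $$ (I,J) = (\<Sum>m\<in>M. of_real (c m) * (cnj (g m I) * g m J)) + of_real c0 * (cnj (h I) * h J)"
    and v: "v \<in> carrier_vec n"
  shows "0 \<le> Re (map_vec cnj v \<bullet> (A *\<^sub>v v))"
proof -
  define S where "S m = (\<Sum>J<n. g m J * v$J)" for m
  define T where "T = (\<Sum>J<n. h J * v$J)"
  have e1: "map_vec cnj v \<bullet> (A *\<^sub>v v) = (\<Sum>I<n. cnj (v$I) * (\<Sum>J<n. A$$(I,J) * v$J))"
    using A v by (simp add: scalar_prod_def lessThan_atLeast0)
  have e2: "(\<Sum>J<n. A$$(I,J) * v$J) = (\<Sum>m\<in>M. of_real (c m) * cnj (g m I) * S m) + of_real c0 * cnj (h I) * T"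
    if I: "I < n" for I
  proof -
    have "(\<Sum>J<n. A$$(I,J) * v$J) = (\<Sum>J<n. (\<Sum>m\<in>M. of_real (c m) * cnj (g m I) * (g m J * v$J)) + of_real c0 * cnj (h I) * (h J * v$J))"
      by (rule sum.cong) (auto simp: ent I distrib_right distrib_left sum_distrib_right sum_distrib_left mult_ac)
    also have "\<dots> = (\<Sum>m\<in>M. of_real (c m) * cnj (g m I) * S m) + of_real c0 * cnj (h I) * T"
      unfolding S_def T_def by (simp add: sum.distrib sum_distrib_left sum.swap[of _ M])
    finally show ?thesis .
  qed
  have "map_vec cnj v \<bullet> (A *\<^sub>v v) = (\<Sum>I<n. (\<Sum>m\<in>M. of_real (c m) * (cnj (g m I * v$I)) * S m) + of_real c0 * cnj (h I * v$I) * T)"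
  proof -
    have "(\<Sum>I<n. cnj (v$I) * (\<Sum>J<n. A$$(I,J) * v$J)) = (\<Sum>I<n. cnj (v$I) * ((\<Sum>m\<in>M. of_real (c m) * cnj (g m I) * S m) + of_real c0 * cnj (h I) * T))"
      by (rule sum.cong) (simp_all add: e2)
    also have "\<dots> = (\<Sum>I<n. (\<Sum>m\<in>M. of_real (c m) * (cnj (g m I * v$I)) * S m) + of_real c0 * cnj (h I * v$I) * T)"
      by (rule sum.cong) (simp_all add: distrib_left sum_distrib_left mult_ac)
    finally show ?thesis unfolding e1 .
  qed
  also have "\<dots> = (\<Sum>m\<in>M. of_real (c m) * (cnj (S m) * S m)) + of_real c0 * (cnj T * T)"
    unfolding S_def T_def by (simp add: sum.distrib sum_distrib_right sum.swap[of _ M] mult_ac sum_distrib_left)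
  finally have e: "map_vec cnj v \<bullet> (A *\<^sub>v v) = (\<Sum>m\<in>M. of_real (c m) * (cnj (S m) * S m)) + of_real c0 * (cnj T * T)" .
  have r: "\<And>z. cnj z * z = of_real ((Re z)^2 + (Im z)^2)" by (metis complex_mult_cnj mult.commute)
  show ?thesis unfolding e r using cpos c0
    by (simp add: Re_sum sum_nonneg del: of_real_add)
qed

context
  fixes d :: nat and X Y :: "complex mat"
  assumes d0: "0 < d" and cX: "X \<in> carrier_mat d d" and cY: "Y \<in> carrier_mat d d"
    and dX: "diagonal_mat X" and dY: "diagonal_mat Y"
begin

lemma Zs_c: "Zs X Y a \<in> carrier_mat d d" using cX cY by (simp add: Zs_def)
lemma Zs_d: "diagonal_mat (Zs X Y a)" using dX dY by (simp add: Zs_def)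

lemma H1_entry: assumes "I < 2*(d*d)" "J < 2*(d*d)"
  shows "H1 d X Y $$ (I,J) = (if I mod (d*d) = J mod (d*d) then
     (\<Sum>k<d. cnj (Zs X Y (I div (d*d)) $$ (k,k)) * Zs X Y (J div (d*d)) $$ (k,k)) else 0)"
proof -
  have lt: "I div (d*d) < 2" "J div (d*d) < 2" using assms by (auto simp: less_mult_imp_div_less)
  have q: "I mod (d*d) < d*d" "J mod (d*d) < d*d" using d0 by auto
  have e: "H1 d X Y $$ (I,J) = trace (adj (Zs X Y (I div (d*d))) * Zs X Y (J div (d*d))) * 1\<^sub>m (d*d) $$ (I mod (d*d), J mod (d*d))"
    unfolding H1_def frob_sq_def using assms
    by (subst kron_index) (auto simp: mat2_index[where h="\<lambda>A B. trace (adj A * B)", OF lt, simplified])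
  show ?thesis unfolding e index_one_mat(1)[OF q] trace_adj_mult[OF Zs_c Zs_c Zs_d Zs_d] by simp
qed

lemma H2_entry: assumes "I < 2*(d*d)" "J < 2*(d*d)"
  shows "H2 d X Y $$ (I,J) = (if I mod (d*d) = J mod (d*d) then
     cnj (Zs X Y (I div (d*d)) $$ ((I mod (d*d)) div d,(I mod (d*d)) div d)) * Zs X Y (J div (d*d)) $$ ((I mod (d*d)) div d,(I mod (d*d)) div d) else 0)"
proof -
  have c: "\<And>a b. (\<lambda>A B. adj A * B) (Zs X Y a) (Zs X Y b) \<in> carrier_mat d d"
  proof -
    fix a b show "(\<lambda>A B. adj A * B) (Zs X Y a) (Zs X Y b) \<in> carrier_mat d d"
      using Zs_c[of a] Zs_c[of b] unfolding adj_def cconj_def carrier_mat_def by simp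
  qed
  have dm: "dim_row (blk (adj X * X) (adj X * Y) (adj Y * X) (adj Y * Y)) = 2*d"
       "dim_col (blk (adj X * X) (adj X * Y) (adj Y * X) (adj Y * Y)) = 2*d"
    using blk_dim[OF c[of 0 0] c[of 1 1]] by (simp_all add: Zs_def)
  have lt: "I div d < 2*d" "J div d < 2*d" using assms
    less_mult_imp_div_less[of I "2*d" d] less_mult_imp_div_less[of J "2*d" d] by (simp_all add: mult.assoc)
  have lt2: "(I div d) mod d < d" "(J div d) mod d < d" using d0 by auto
  have e: "H2 d X Y $$ (I,J) = (adj (Zs X Y (I div d div d)) * Zs X Y (J div d div d)) $$ ((I div d) mod d, (J div d) mod d) * (1\<^sub>m d) $$ (I mod d, J mod d)"
    unfolding H2_def using assms d0 dm lt
    by (subst kron_index) (auto simp: blk_index[where G="\<lambda>A B. adj A * B", OF c, simplified] mult.assoc)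
  have q: "I mod d < d" "J mod d < d" using d0 by auto
  show ?thesis unfolding e
    unfolding diag_adj_mult[OF Zs_c Zs_c Zs_d Zs_d lt2] index_one_mat(1)[OF q]
    unfolding arith1[OF d0] by auto
qed

lemma H3_entry: assumes "I < 2*(d*d)" "J < 2*(d*d)"
  shows "H3 d X Y $$ (I,J) = (if I mod (d*d) = J mod (d*d) then
     cnj (Zs X Y (I div (d*d)) $$ ((I mod (d*d)) mod d,(I mod (d*d)) mod d)) * Zs X Y (J div (d*d)) $$ ((I mod (d*d)) mod d,(I mod (d*d)) mod d) else 0)"
proof -
  have c: "\<And>a b. (\<lambda>A B. kron (1\<^sub>m d) (cconj A * transpose_mat B)) (Zs X Y a) (Zs X Y b) \<in> carrier_mat (d*d) (d*d)"
  proof -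
    fix a b show "(\<lambda>A B. kron (1\<^sub>m d) (cconj A * transpose_mat B)) (Zs X Y a) (Zs X Y b) \<in> carrier_mat (d*d) (d*d)"
      using Zs_c[of a] Zs_c[of b] unfolding cconj_def carrier_mat_def by simp
  qed
  have q: "I mod (d*d) < d*d" "J mod (d*d) < d*d" using d0 by auto
  have q2: "(I mod (d*d)) div d < d" "(J mod (d*d)) div d < d" using q d0 by (auto simp: less_mult_imp_div_less)
  have q3: "(I mod (d*d)) mod d < d" "(J mod (d*d)) mod d < d" using d0 by auto
  have dd: "\<And>a b. dim_row (cconj (Zs X Y a) * transpose_mat (Zs X Y b)) = d"
           "\<And>a b. dim_col (cconj (Zs X Y a) * transpose_mat (Zs X Y b)) = d"
    using Zs_c by (auto simp: cconj_def)
  have e0: "H3 d X Y $$ (I,J) = kron (1\<^sub>m d) (cconj (Zs X Y (I div (d*d))) * transpose_mat (Zs X Y (J div (d*d)))) $$ (I mod (d*d), J mod (d*d))"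
    unfolding H3_def using assms
    by (subst blk_index[where G="\<lambda>A B. kron (1\<^sub>m d) (cconj A * transpose_mat B)", OF c, simplified]) simp_all
  have e: "H3 d X Y $$ (I,J) = 1\<^sub>m d $$ ((I mod (d*d)) div d, (J mod (d*d)) div d) *
      (cconj (Zs X Y (I div (d*d))) * transpose_mat (Zs X Y (J div (d*d)))) $$ ((I mod (d*d)) mod d, (J mod (d*d)) mod d)"
    unfolding e0 using q dd by (subst kron_index) auto
  show ?thesis unfolding e index_one_mat(1)[OF q2] diag_cconj_mult[OF Zs_c Zs_c Zs_d Zs_d q3]
    by (auto simp: arith1[OF d0])
qed

lemma H4_entry: assumes "I < 2*(d*d)" "J < 2*(d*d)"
  shows "H4 X Y $$ (I,J) = cnj (Zs X Y (I div (d*d)) $$ ((I mod (d*d)) mod d,(I mod (d*d)) div d)) * Zs X Y (J div (d*d)) $$ ((J mod (d*d)) mod d,(J mod (d*d)) div d)"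
proof -
  have c: "\<And>a b. (\<lambda>A B. cconj (stack A) * transpose_mat (stack B)) (Zs X Y a) (Zs X Y b) \<in> carrier_mat (d*d) (d*d)"
  proof -
    fix a b show "(\<lambda>A B. cconj (stack A) * transpose_mat (stack B)) (Zs X Y a) (Zs X Y b) \<in> carrier_mat (d*d) (d*d)"
      using Zs_c[of a] Zs_c[of b] unfolding cconj_def carrier_mat_def by (simp add: stack_def)
  qed
  have q: "I mod (d*d) < d*d" "J mod (d*d) < d*d" using d0 by auto
  show ?thesis
    unfolding H4_def using assms q
    apply (subst blk_index[where G="\<lambda>A B. cconj (stack A) * transpose_mat (stack B)", OF c, simplified])
    by (auto simp: stack_mult[OF Zs_c Zs_c])
qed

lemma H1_dim: "H1 d X Y \<in> carrier_mat (2*(d*d)) (2*(d*d))" unfolding H1_def by (intro carrier_matI) simp_all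
lemma H2_dim: "H2 d X Y \<in> carrier_mat (2*(d*d)) (2*(d*d))"
proof -
  have a: "adj X * X \<in> carrier_mat d d" "adj Y * Y \<in> carrier_mat d d" using cX cY
    by (intro carrier_matI; simp add: adj_def cconj_def)+
  show ?thesis unfolding H2_def carrier_mat_def
    using blk_dim[OF a, of "adj X * Y" "adj Y * X"] by simp
qed
lemma H3_dim: "H3 d X Y \<in> carrier_mat (2*(d*d)) (2*(d*d))"
proof -
  have b: "kron (1\<^sub>m d) (cconj X * transpose_mat X) \<in> carrier_mat (d*d) (d*d)"
       "kron (1\<^sub>m d) (cconj Y * transpose_mat Y) \<in> carrier_mat (d*d) (d*d)" using cX cY
    by (intro carrier_matI; simp add: cconj_def)+
  show ?thesis unfolding H3_def
    using blk_dim[OF b, of "kron (1\<^sub>m d) (cconj X * transpose_mat Y)" "kron (1\<^sub>m d) (cconj Y * transpose_mat X)"]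
    unfolding carrier_mat_def by simp
qed
lemma H4_dim: "H4 X Y \<in> carrier_mat (2*(d*d)) (2*(d*d))"
proof -
  have c: "cconj (stack X) * transpose_mat (stack X) \<in> carrier_mat (d*d) (d*d)"
       "cconj (stack Y) * transpose_mat (stack Y) \<in> carrier_mat (d*d) (d*d)" using cX cY
    by (intro carrier_matI; simp add: cconj_def stack_def)+
  show ?thesis unfolding H4_def
    using blk_dim[OF c, of "cconj (stack X) * transpose_mat (stack Y)" "cconj (stack Y) * transpose_mat (stack X)"]
    unfolding carrier_mat_def by simp
qed
lemmas H_dims = H1_dim H2_dim H3_dim H4_dim

lemma Hmat_dims: "Hmat d X Y \<in> carrier_mat (2*(d*d)) (2*(d*d))"
  using H_dims(4) unfolding Hmat_def carrier_mat_def by simp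

lemma Hmat_entry0: assumes "I < 2*(d*d)" "J < 2*(d*d)"
  shows "Hmat d X Y $$ (I,J) = H1 d X Y $$ (I,J) - 1/2 * (H2 d X Y $$ (I,J) + H3 d X Y $$ (I,J)) + 1/4 * H4 X Y $$ (I,J)"
proof -
  have e: "dim_row (H2 d X Y + H3 d X Y) = 2*(d*d)" "dim_col (H2 d X Y + H3 d X Y) = 2*(d*d)"
     "dim_row (H4 X Y) = 2*(d*d)" "dim_col (H4 X Y) = 2*(d*d)"
     "dim_row (H3 d X Y) = 2*(d*d)" "dim_col (H3 d X Y) = 2*(d*d)"
    using H_dims(3,4) by auto
  show ?thesis unfolding Hmat_def using assms e by (simp add: index_add_mat index_minus_mat index_smult_mat)
qed

lemma inner_sum: assumes "r < d*d"
  shows "(\<Sum>i<d*d. of_real (ww d (k,i)) * (cnj (if r = i then a else 0) * (if s = i then b else 0)))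
    = (if r = s then of_real (ww d (k,r)) * (cnj a * b) else 0)"
proof -
  have "(\<Sum>i<d*d. of_real (ww d (k,i)) * (cnj (if r = i then a else 0) * (if s = i then b else 0)))
      = (\<Sum>i<d*d. if i = r then (if r = s then of_real (ww d (k,r)) * (cnj a * b) else 0) else 0)"
    by (rule sum.cong) auto
  also have "\<dots> = (if r = s then of_real (ww d (k,r)) * (cnj a * b) else 0)" using assms by simp
  finally show ?thesis .
qed

lemma k_sum: assumes "p < d" "q < d"
  shows "(\<Sum>k<d. complex_of_real (1 - (if k = p then 1/2 else 0) - (if k = q then 1/2 else 0)) * c k)
     = (\<Sum>k<d. c k) - 1/2 * c p - 1/2 * c q"
proof -
  have "(\<Sum>k<d. complex_of_real (1 - (if k = p then 1/2 else 0) - (if k = q then 1/2 else 0)) * c k)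
     = (\<Sum>k<d. c k - (if k = p then 1/2 * c p else 0) - (if k = q then 1/2 * c q else 0))"
    by (rule sum.cong) auto
  also have "\<dots> = (\<Sum>k<d. c k) - 1/2 * c p - 1/2 * c q"
    using assms by (simp add: sum_subtractf)
  finally show ?thesis .
qed

lemma Hmat_rep: assumes "I < 2*(d*d)" "J < 2*(d*d)"
  shows "Hmat d X Y $$ (I,J) = (\<Sum>m\<in>{..<d}\<times>{..<d*d}. of_real (ww d m) * (cnj (gg d X Y m I) * gg d X Y m J))
     + of_real (1/4) * (cnj (hh d X Y I) * hh d X Y J)"
proof -
  define r where "r = I mod (d*d)"
  define c where "c = (\<lambda>k. cnj (Zs X Y (I div (d*d)) $$ (k,k)) * Zs X Y (J div (d*d)) $$ (k,k))"
  have r: "r < d*d" using d0 unfolding r_def by auto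
  have p: "r div d < d" "r mod d < d" using r d0 by (auto simp: less_mult_imp_div_less)
  have "(\<Sum>m\<in>{..<d}\<times>{..<d*d}. of_real (ww d m) * (cnj (gg d X Y m I) * gg d X Y m J))
      = (\<Sum>k<d. \<Sum>i<d*d. of_real (ww d (k,i)) * (cnj (gg d X Y (k,i) I) * gg d X Y (k,i) J))"
    by (simp add: sum.cartesian_product)
  also have "\<dots> = (\<Sum>k<d. if r = J mod (d*d) then of_real (ww d (k,r)) * c k else 0)"
    unfolding gg_def c_def r_def[symmetric] using inner_sum[OF r] by simp
  also have "\<dots> = (if r = J mod (d*d) then (\<Sum>k<d. of_real (ww d (k,r)) * c k) else 0)"
    by simp
  also have "(\<Sum>k<d. of_real (ww d (k,r)) * c k) = (\<Sum>k<d. c k) - 1/2 * c (r div d) - 1/2 * c (r mod d)"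
    using k_sum[OF p, of c] by (simp add: ww_def)
  finally have S: "(\<Sum>m\<in>{..<d}\<times>{..<d*d}. of_real (ww d m) * (cnj (gg d X Y m I) * gg d X Y m J)) =
     (if r = J mod (d*d) then (\<Sum>k<d. c k) - 1/2 * c (r div d) - 1/2 * c (r mod d) else 0)"
    by (cases "r = J mod (d*d)") simp_all
  show ?thesis unfolding S Hmat_entry0[OF assms] H1_entry[OF assms] H2_entry[OF assms] H3_entry[OF assms]
      H4_entry[OF assms]
    by (auto simp: c_def r_def hh_def algebra_simps)
qed

end

theorem corollary5p2:
  fixes d :: nat and X Y :: "complex mat"
  assumes "d \<ge> 3"
    and "X \<in> carrier_mat d d" and "Y \<in> carrier_mat d d"
    and "diagonal_mat X" and "diagonal_mat Y"
  shows "psd (Hmat d X Y) \<and> Hmat d X Y \<in> carrier_mat (2 * d^2) (2 * d^2)"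
proof -
  have d0: "0 < d" using assms(1) by simp
  note ctx = d0 assms(2-5)
  have C: "Hmat d X Y \<in> carrier_mat (2*(d*d)) (2*(d*d))" using Hmat_dims[OF ctx] .
  have herm: "adj (Hmat d X Y) = Hmat d X Y"
  proof (rule eq_matI)
    fix i j assume i: "i < dim_row (Hmat d X Y)" and j: "j < dim_col (Hmat d X Y)"
    have i': "i < 2*(d*d)" and j': "j < 2*(d*d)" using i j C by auto
    have "adj (Hmat d X Y) $$ (i,j) = cnj (Hmat d X Y $$ (j,i))"
      using i' j' C by (simp add: adj_def cconj_def)
    also have "\<dots> = Hmat d X Y $$ (i,j)"
      unfolding Hmat_rep[OF ctx i' j'] Hmat_rep[OF ctx j' i'] by (simp add: mult_ac)
    finally show "adj (Hmat d X Y) $$ (i,j) = Hmat d X Y $$ (i,j)" .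
  qed (use C in \<open>auto simp: adj_def cconj_def\<close>)
  have Q: "\<forall>v \<in> carrier_vec (2*(d*d)). 0 \<le> Re (map_vec cnj v \<bullet> (Hmat d X Y *\<^sub>v v))"
  proof
    fix v :: "complex vec" assume v: "v \<in> carrier_vec (2*(d*d))"
    show "0 \<le> Re (map_vec cnj v \<bullet> (Hmat d X Y *\<^sub>v v))"
      by (rule gram_psd[OF C _ ww_nonneg _ Hmat_rep[OF ctx] v]) auto
  qed
  show ?thesis unfolding psd_def power2_eq_square using C herm Q by blast
qed

end
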